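(* Let $\mathcal{F}$ be a finite family of constraints and $\mathcal{F}^\perp=\{g^\perp\mid g\in\mathcal{F}\}$. If $\mathcal{F}^\perp$ pins $\ell_0$ then $\mathcal{F}$ pins $\ell_0$. If $\mathcal{F}$ pins $\ell_0$ and no four constraints in $\mathcal{F}$ are dependent, then $\mathcal{F}^\perp$ pins $\ell_0$.
   Context: All lines are oriented. For non-parallel oriented lines $\ell_1,\ell_2$ with directions $d_1,d_2$, $\ell_2$ passes to the right of $\ell_1$ if $\ell_2$ can be translated by a positive multiple of $d_1\times d_2$ to meet $\ell_1$. Coordinates are chosen so that $\ell_0$ is the $z$-axis. A constraint is an oriented line meeting $\ell_0$ in exactly one point; a line satisfies a constraint $g$ if it meets $g$ or passes to the right of $g$. A family of constraints pins $\ell_0$ if there is a neighborhood of $\ell_0$ in the space of oriented lines in which $\ell_0$ is the only line satisfying all its constraints. $g(\lambda,\alpha,\delta)$ denotes the constraint through $(0,0,\lambda)$ and $(\cos\alpha,\sin\alpha,\lambda+\delta)$, oriented from the first to the second point (every constraint has this form). The orthogonalized constraint of $g=g(\lambda,\alpha,\delta)$ is $g^\perp=g(\lambda,\alpha,0)$ (the projection of $g$ onto the plane orthogonal to $\ell_0$ through $g\cap\ell_0$). The normal of $g(\lambda,\alpha,\delta)$ is $\eta_g=\big((1-\lambda)\sin\alpha,-(1-\lambda)\cos\alpha,\lambda\sin\alpha,-\lambda\cos\alpha\big)$; a family of constraints is dependent if their normals are linearly dependent. *)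

theory Defs
  imports "HOL-Analysis.Analysis" "HOL-Analysis.Cross3"
begin

text \<open>An oriented line in R^3 is represented by a pair (p, d): a point p on it and a
  nonzero direction vector d.\<close>

type_synonym oline = "(real^3) \<times> (real^3)"

definition is_oline :: "oline \<Rightarrow> bool" where
  "is_oline l \<longleftrightarrow> snd l \<noteq> 0"

definition same_oline :: "oline \<Rightarrow> oline \<Rightarrow> bool" where
  "same_oline l m \<longleftrightarrow> (\<exists>c>0. snd m = c *\<^sub>R snd l) \<and> (\<exists>t. fst m - fst l = t *\<^sub>R snd l)"

text \<open>Canonical representative: unit direction and the foot point closest to the origin.
  The topology on the space of oriented lines is the one induced by this embedding
  into R^3 x R^3.\<close>

definition canon :: "oline \<Rightarrow> oline" where
  "canon l = (let u = (1 / norm (snd l)) *\<^sub>R snd l in (fst l - (fst l \<bullet> u) *\<^sub>R u, u))"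

definition meets :: "oline \<Rightarrow> oline \<Rightarrow> bool" where
  "meets l m \<longleftrightarrow> (\<exists>s t. fst l + s *\<^sub>R snd l = fst m + t *\<^sub>R snd m)"

definition parallel :: "oline \<Rightarrow> oline \<Rightarrow> bool" where
  "parallel l m \<longleftrightarrow> cross3 (snd l) (snd m) = 0"

definition passes_right :: "oline \<Rightarrow> oline \<Rightarrow> bool" where
  "passes_right l2 l1 \<longleftrightarrow> \<not> parallel l1 l2 \<and>
     (\<exists>c>0. meets (fst l2 + c *\<^sub>R cross3 (snd l1) (snd l2), snd l2) l1)"

definition satisfies :: "oline \<Rightarrow> oline \<Rightarrow> bool" where
  "satisfies l g \<longleftrightarrow> meets l g \<or> passes_right l g"

definition ell0 :: oline where
  "ell0 = (0, vector [0, 0, 1])"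

definition pins :: "oline set \<Rightarrow> bool" where
  "pins G \<longleftrightarrow> (\<forall>g\<in>G. satisfies ell0 g) \<and>
     (\<exists>\<epsilon>>0. \<forall>l. is_oline l \<and> dist (canon l) (canon ell0) < \<epsilon> \<and> (\<forall>g\<in>G. satisfies l g)
              \<longrightarrow> same_oline l ell0)"

definition gcon :: "real \<times> real \<times> real \<Rightarrow> oline" where
  "gcon p = (case p of (lam, \<alpha>, \<delta>) \<Rightarrow>
     (vector [0, 0, lam], vector [cos \<alpha>, sin \<alpha>, \<delta>]))"

definition orth :: "real \<times> real \<times> real \<Rightarrow> real \<times> real \<times> real" where
  "orth p = (case p of (lam, \<alpha>, \<delta>) \<Rightarrow> (lam, \<alpha>, 0))"

definition normal :: "real \<times> real \<times> real \<Rightarrow> real^4" where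
  "normal p = (case p of (lam, \<alpha>, \<delta>) \<Rightarrow>
     vector [(1 - lam) * sin \<alpha>, -(1 - lam) * cos \<alpha>, lam * sin \<alpha>, -lam * cos \<alpha>])"

text \<open>A family of constraints is dependent if their normals are linearly dependent
  (as a family, so two members with equal normals make it dependent).\<close>

definition dependent_family :: "(real \<times> real \<times> real) set \<Rightarrow> bool" where
  "dependent_family S \<longleftrightarrow> \<not> (inj_on normal S \<and> independent (normal ` S))"

end

theory Submission
  imports Defs
begin

lemma vector_4 [simp]:
 "(vector [a,b,c,d] ::('a::zero)^4)$1 = a"
 "(vector [a,b,c,d] ::('a::zero)^4)$2 = b"
 "(vector [a,b,c,d] ::('a::zero)^4)$3 = c"
 "(vector [a,b,c,d] ::('a::zero)^4)$4 = d"
  unfolding vector_def by simp_all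

lemma cramer3:
  fixes w u v :: "real^3"
  shows "((cross3 u v) \<bullet> (cross3 u v)) *\<^sub>R w = (w \<bullet> cross3 v (cross3 u v)) *\<^sub>R u
     + (w \<bullet> cross3 (cross3 u v) u) *\<^sub>R v + (w \<bullet> cross3 u v) *\<^sub>R cross3 u v"
  unfolding vec_eq_iff forall_3
  by (simp add: cross3_def inner_vec_def sum_3; algebra)

lemma meets_iff:
  assumes "cross3 (snd m) (snd l) \<noteq> 0"
  shows "meets l m \<longleftrightarrow> (fst m - fst l) \<bullet> cross3 (snd m) (snd l) = 0"
proof
  assume "meets l m"
  then obtain s t where e: "fst l + s *\<^sub>R snd l = fst m + t *\<^sub>R snd m" unfolding meets_def by auto
  have "fst m - fst l = s *\<^sub>R snd l - t *\<^sub>R snd m" using e by (simp add: algebra_simps)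
  then show "(fst m - fst l) \<bullet> cross3 (snd m) (snd l) = 0"
    by (simp add: inner_diff_left dot_cross_self)
next
  define w where "w = fst m - fst l"
  define n where "n = cross3 (snd m) (snd l)"
  assume h: "(fst m - fst l) \<bullet> cross3 (snd m) (snd l) = 0"
  have nn: "n \<bullet> n \<noteq> 0" using assms n_def by simp
  have c: "(n \<bullet> n) *\<^sub>R w = (w \<bullet> cross3 (snd l) n) *\<^sub>R snd m + (w \<bullet> cross3 n (snd m)) *\<^sub>R snd l"
    using cramer3[of "snd m" "snd l" w] h unfolding w_def n_def by simp
  define s where "s = (w \<bullet> cross3 n (snd m)) / (n \<bullet> n)"
  define t where "t = - (w \<bullet> cross3 (snd l) n) / (n \<bullet> n)"
  have "w = s *\<^sub>R snd l - t *\<^sub>R snd m"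
  proof -
    have "w = (1/(n\<bullet>n)) *\<^sub>R ((n \<bullet> n) *\<^sub>R w)" using nn by simp
    also have "\<dots> = s *\<^sub>R snd l - t *\<^sub>R snd m" unfolding c s_def t_def
      by (simp add: scaleR_add_right algebra_simps)
    finally show ?thesis .
  qed
  then have "fst l + s *\<^sub>R snd l = fst m + t *\<^sub>R snd m" unfolding w_def by (simp add: algebra_simps)
  then show "meets l m" unfolding meets_def by blast
qed

lemma sat_iff:
  assumes "cross3 (snd g) (snd l) \<noteq> 0"
  shows "satisfies l g \<longleftrightarrow> (fst g - fst l) \<bullet> cross3 (snd g) (snd l) \<ge> 0"
proof -
  define n where "n = cross3 (snd g) (snd l)"
  have nn: "n \<bullet> n > 0" using assms n_def by simp
  have m: "meets l g \<longleftrightarrow> (fst g - fst l) \<bullet> n = 0" using meets_iff[OF assms] n_def by simp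
  have pr: "passes_right l g \<longleftrightarrow> (fst g - fst l) \<bullet> n > 0"
  proof -
    have "meets (fst l + c *\<^sub>R n, snd l) g \<longleftrightarrow> (fst g - fst l) \<bullet> n = c * (n \<bullet> n)" for c
      using meets_iff[of g "(fst l + c *\<^sub>R n, snd l)"] assms n_def
      by (simp add: inner_diff_left algebra_simps)
    then have "passes_right l g \<longleftrightarrow> (\<exists>c>0. (fst g - fst l) \<bullet> n = c * (n \<bullet> n))"
      unfolding passes_right_def parallel_def using assms n_def by simp
    also have "\<dots> \<longleftrightarrow> (fst g - fst l) \<bullet> n > 0"
    proof
      assume "\<exists>c>0. (fst g - fst l) \<bullet> n = c * (n \<bullet> n)"
      then show "(fst g - fst l) \<bullet> n > 0" using nn by auto
    next
      assume "(fst g - fst l) \<bullet> n > 0"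
      then show "\<exists>c>0. (fst g - fst l) \<bullet> n = c * (n \<bullet> n)"
        using nn by (intro exI[of _ "((fst g - fst l) \<bullet> n) / (n \<bullet> n)"]) auto
    qed
    finally show ?thesis .
  qed
  show ?thesis unfolding satisfies_def m pr n_def by auto
qed


lemma meets_shift:
  assumes "c \<noteq> 0"
  shows "meets (p + t *\<^sub>R d, c *\<^sub>R d) m \<longleftrightarrow> meets (p, d) m"
proof
  assume "meets (p + t *\<^sub>R d, c *\<^sub>R d) m"
  then obtain s r where "p + t *\<^sub>R d + s *\<^sub>R (c *\<^sub>R d) = fst m + r *\<^sub>R snd m" unfolding meets_def by auto
  then have "p + (t + s * c) *\<^sub>R d = fst m + r *\<^sub>R snd m" by (simp add: algebra_simps)
  then show "meets (p, d) m" unfolding meets_def by auto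
next
  assume "meets (p, d) m"
  then obtain s r where e: "p + s *\<^sub>R d = fst m + r *\<^sub>R snd m" unfolding meets_def by auto
  have "((s - t) / c) *\<^sub>R (c *\<^sub>R d) = (s - t) *\<^sub>R d" using assms by simp
  then have "p + t *\<^sub>R d + ((s - t) / c) *\<^sub>R (c *\<^sub>R d) = p + s *\<^sub>R d" by (simp add: scaleR_diff_left)
  then show "meets (p + t *\<^sub>R d, c *\<^sub>R d) m" unfolding meets_def using e by (metis fst_conv snd_conv)
qed

lemma same_oline_sat:
  assumes "same_oline l m"
  shows "satisfies m g \<longleftrightarrow> satisfies l g"
proof -
  obtain c t where c: "c > 0" "snd m = c *\<^sub>R snd l" and t: "fst m - fst l = t *\<^sub>R snd l"
    using assms unfolding same_oline_def by auto
  obtain p d where l: "l = (p, d)" by (cases l)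
  have m: "m = (p + t *\<^sub>R d, c *\<^sub>R d)" using c t l by (metis add.commute diff_add_cancel fst_conv prod.collapse snd_conv)
  have me: "meets m g \<longleftrightarrow> meets l g" unfolding m l using c meets_shift by (metis order_less_irrefl)
  have pa: "parallel g m \<longleftrightarrow> parallel g l" unfolding parallel_def m l using c
    by (simp add: cross_mult_right)
  have "meets (fst m + k *\<^sub>R cross3 (snd g) (snd m), snd m) g \<longleftrightarrow>
        meets (fst l + (k*c) *\<^sub>R cross3 (snd g) (snd l), snd l) g" for k
  proof -
    have "(fst m + k *\<^sub>R cross3 (snd g) (snd m), snd m) =
       ((fst l + (k*c) *\<^sub>R cross3 (snd g) (snd l)) + t *\<^sub>R d, c *\<^sub>R d)"
      unfolding m l by (simp add: cross_mult_right algebra_simps)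
    then show ?thesis using meets_shift c l by (metis order_less_irrefl snd_conv)
  qed
  then have pr: "passes_right m g \<longleftrightarrow> passes_right l g"
    unfolding passes_right_def pa
    apply safe
    subgoal for k by (intro exI[of _ "k*c"]) (use c in auto)
    subgoal for k by (intro exI[of _ "k/c"]) (use c in auto)
    done
  show ?thesis unfolding satisfies_def me pr ..
qed

lemma same_oline_trans:
  "same_oline l m \<Longrightarrow> same_oline m k \<Longrightarrow> same_oline l k"
  unfolding same_oline_def
proof (elim conjE exE)
  fix c1 c2 t1 t2
  assume a: "c1 > 0" "snd m = c1 *\<^sub>R snd l" "fst m - fst l = t1 *\<^sub>R snd l"
     "c2 > 0" "snd k = c2 *\<^sub>R snd m" "fst k - fst m = t2 *\<^sub>R snd m"
  have "snd k = (c2*c1) *\<^sub>R snd l" using a by simp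
  moreover have "fst k - fst l = (t1 + t2 * c1) *\<^sub>R snd l"
  proof -
    have "fst k - fst l = (fst k - fst m) + (fst m - fst l)" by simp
    also have "\<dots> = (t1 + t2 * c1) *\<^sub>R snd l" using a by (simp add: algebra_simps)
    finally show ?thesis .
  qed
  ultimately show "(\<exists>c>0. snd k = c *\<^sub>R snd l) \<and> (\<exists>t. fst k - fst l = t *\<^sub>R snd l)"
    using a by (metis mult_pos_pos)
qed

lemma same_oline_sym:
  "same_oline l m \<Longrightarrow> same_oline m l"
  unfolding same_oline_def
proof (elim conjE exE)
  fix c t
  assume a: "c > 0" "snd m = c *\<^sub>R snd l" "fst m - fst l = t *\<^sub>R snd l"
  have "snd l = (1/c) *\<^sub>R snd m" using a by simp
  moreover have "fst l - fst m = (- t / c) *\<^sub>R snd m" using a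
    by (simp add: algebra_simps)
  ultimately show "(\<exists>c>0. snd l = c *\<^sub>R snd m) \<and> (\<exists>t. fst l - fst m = t *\<^sub>R snd m)"
    using a by (metis divide_pos_pos zero_less_one)
qed

lemma same_oline_canon:
  assumes "is_oline l" shows "same_oline l (canon l)"
proof -
  have n: "norm (snd l) > 0" using assms unfolding is_oline_def by simp
  define u where "u = (1 / norm (snd l)) *\<^sub>R snd l"
  have "canon l = (fst l - (fst l \<bullet> u) *\<^sub>R u, u)" unfolding canon_def u_def Let_def by simp
  moreover have "fst l - (fst l \<bullet> u) *\<^sub>R u - fst l = (- (fst l \<bullet> u) / norm (snd l)) *\<^sub>R snd l"
    unfolding u_def by simp
  ultimately show ?thesis unfolding same_oline_def using n
    by (metis divide_pos_pos fst_conv snd_conv u_def zero_less_one)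
qed

definition lineY :: "real^4 \<Rightarrow> oline" where
  "lineY y = (vector [y$1, y$2, 0], vector [y$3 - y$1, y$4 - y$2, 1])"

definition Phi :: "real \<times> real \<times> real \<Rightarrow> real^4 \<Rightarrow> real" where
  "Phi g y = - (normal g \<bullet> y) + snd (snd g) * (y$1 * y$4 - y$2 * y$3)"

lemma triple_lineY:
  "(fst (gcon g) - fst (lineY y)) \<bullet> cross3 (snd (gcon g)) (snd (lineY y)) = Phi g y"
  by (cases g) (simp add: gcon_def lineY_def Phi_def normal_def cross3_def inner_vec_def sum_3 sum_4 algebra_simps)

lemma nonpar_lineY:
  assumes "(snd (snd g))^2 * ((y$3 - y$1)^2 + (y$4 - y$2)^2) < 1"
  shows "cross3 (snd (gcon g)) (snd (lineY y)) \<noteq> 0"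
proof
  obtain lam al de where g: "g = (lam, al, de)" by (cases g) auto
  assume "cross3 (snd (gcon g)) (snd (lineY y)) = 0"
  then have "sin al = de * (y$4 - y$2)" "cos al = de * (y$3 - y$1)"
    unfolding g gcon_def lineY_def cross3_def vec_eq_iff forall_3 by auto
  then have "(de * (y$4 - y$2))^2 + (de * (y$3 - y$1))^2 = 1"
    using sin_cos_squared_add[of al] by simp
  moreover have "de^2 * ((y$3 - y$1)^2 + (y$4 - y$2)^2) = (de * (y$4 - y$2))^2 + (de * (y$3 - y$1))^2"
    by (simp add: power2_eq_square algebra_simps)
  ultimately have "de^2 * ((y$3 - y$1)^2 + (y$4 - y$2)^2) = 1" by simp
  then show False using assms g by simp
qed

lemma sat_lineY:
  assumes "(snd (snd g))^2 * ((y$3 - y$1)^2 + (y$4 - y$2)^2) < 1"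
  shows "satisfies (lineY y) (gcon g) \<longleftrightarrow> Phi g y \<ge> 0"
  using sat_iff[OF nonpar_lineY[OF assms]] triple_lineY by simp

lemma lineY_ell0: "same_oline (lineY y) ell0 \<longleftrightarrow> y = 0"
proof
  assume "same_oline (lineY y) ell0"
  then obtain c t where c: "(vector [0,0,1]::real^3) = c *\<^sub>R (vector [y$3 - y$1, y$4 - y$2, 1]::real^3)"
    and t: "- (vector [y$1, y$2, 0] :: real^3) = t *\<^sub>R (vector [y$3 - y$1, y$4 - y$2, 1]::real^3)"
    unfolding same_oline_def lineY_def ell0_def by auto
  from c have "c = 1" "y$3 = y$1" "y$4 = y$2" unfolding vec_eq_iff forall_3 by auto
  moreover from t have "t = 0" unfolding vec_eq_iff forall_3 by auto
  ultimately show "y = 0" using t unfolding vec_eq_iff forall_3 forall_4 by auto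
next
  assume "y = 0"
  then have "snd ell0 = 1 *\<^sub>R snd (lineY y)" "fst ell0 - fst (lineY y) = 0 *\<^sub>R snd (lineY y)"
    by (simp_all add: lineY_def ell0_def vec_eq_iff forall_3)
  then show "same_oline (lineY y) ell0" unfolding same_oline_def by (metis zero_less_one)
qed

lemma ell0_sat: "satisfies ell0 (gcon g)"
proof -
  obtain lam al de where g: "g = (lam, al, de)" by (cases g) auto
  have "fst ell0 + lam *\<^sub>R snd ell0 = fst (gcon g) + 0 *\<^sub>R snd (gcon g)"
    unfolding ell0_def g gcon_def vec_eq_iff forall_3 by simp
  then show ?thesis unfolding satisfies_def meets_def by blast
qed


lemma norm_vec3: "norm (vector [a,b,c] :: real^3) = sqrt (a^2 + b^2 + c^2)"
  by (simp add: norm_vec_def L2_set_def sum_3)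

lemma continuous_vector3:
  fixes f g h :: "'a::t2_space \<Rightarrow> real"
  assumes "continuous F f" "continuous F g" "continuous F h"
  shows "continuous F (\<lambda>x. vector [f x, g x, h x] :: real^3)"
proof -
  have "(\<lambda>x. vector [f x, g x, h x] :: real^3) = (\<lambda>x. f x *\<^sub>R axis 1 1 + g x *\<^sub>R axis 2 1 + h x *\<^sub>R axis 3 1)"
    by (auto simp: vec_eq_iff forall_3 axis_def)
  then show ?thesis using assms by (simp add: continuous_intros)
qed

lemma continuous_vector4:
  fixes f g h k :: "'a::t2_space \<Rightarrow> real"
  assumes "continuous F f" "continuous F g" "continuous F h" "continuous F k"
  shows "continuous F (\<lambda>x. vector [f x, g x, h x, k x] :: real^4)"
proof -
  have "(\<lambda>x. vector [f x, g x, h x, k x] :: real^4) = (\<lambda>x. f x *\<^sub>R axis 1 1 + g x *\<^sub>R axis 2 1 + h x *\<^sub>R axis 3 1 + k x *\<^sub>R axis 4 1)"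
    by (auto simp: vec_eq_iff forall_4 axis_def)
  then show ?thesis using assms by (simp add: continuous_intros)
qed

lemma canon_ell0: "canon ell0 = (0, vector [0,0,1])"
  by (simp add: canon_def ell0_def norm_vec3)

lemma canon_lineY0: "canon (lineY 0) = (0, vector [0,0,1])"
  by (simp add: canon_def lineY_def norm_vec3 vec_eq_iff forall_3 Let_def inner_vec_def sum_3)

lemma cont_canon_lineY: "continuous (at 0) (\<lambda>y. canon (lineY y))"
  unfolding canon_def Let_def lineY_def
  by (intro continuous_intros continuous_vector3) (auto simp: norm_vec3)

lemma N1:
  assumes "\<epsilon> > 0"
  shows "\<exists>\<eta>>0. \<forall>y. norm y < \<eta> \<longrightarrow> dist (canon (lineY y)) (canon ell0) < \<epsilon>"
  using cont_canon_lineY[unfolded continuous_at_eps_delta] assms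
  by (simp add: canon_ell0 canon_lineY0 dist_norm)


definition Yf :: "oline \<Rightarrow> real^4" where
  "Yf l = (let q = fst l; u = snd l in
     vector [q$1 - q$3 * u$1 / u$3, q$2 - q$3 * u$2 / u$3,
             q$1 - q$3 * u$1 / u$3 + u$1 / u$3, q$2 - q$3 * u$2 / u$3 + u$2 / u$3])"

lemma Yf_same:
  assumes "snd l $ 3 > 0"
  shows "same_oline l (lineY (Yf l))"
proof -
  obtain q u where l: "l = (q, u)" by (cases l)
  have u3: "u$3 > 0" using assms l by simp
  have "snd (lineY (Yf l)) = (1 / u$3) *\<^sub>R u"
    using u3 by (simp add: l Yf_def lineY_def vec_eq_iff forall_3)
  moreover have "fst (lineY (Yf l)) - fst l = (- q$3 / u$3) *\<^sub>R u"
    using u3 by (simp add: l Yf_def lineY_def vec_eq_iff forall_3)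
  ultimately show ?thesis unfolding same_oline_def using u3 l
    by (metis divide_pos_pos fst_conv snd_conv zero_less_one)
qed

lemma Yf_e3: "Yf (0, vector [0,0,1]) = 0"
  by (simp add: Yf_def vec_eq_iff forall_4)

lemma cont_Yf: "continuous (at (0, vector [0,0,1])) Yf"
  unfolding Yf_def Let_def
  by (intro continuous_intros continuous_vector4) auto

lemma N2:
  assumes "\<eta> > 0"
  shows "\<exists>\<epsilon>>0. \<forall>l. is_oline l \<and> dist (canon l) (canon ell0) < \<epsilon> \<longrightarrow>
     same_oline l (lineY (Yf (canon l))) \<and> norm (Yf (canon l)) < \<eta>"
proof -
  obtain d where d: "d > 0" "\<forall>x. dist x (0, vector [0,0,1]) < d \<longrightarrow> dist (Yf x) (Yf (0, vector [0,0,1])) < \<eta>"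
    using cont_Yf[unfolded continuous_at_eps_delta] assms by blast
  show ?thesis
  proof (intro exI[of _ "min d (1/2)"] conjI allI impI)
    show "min d (1/2) > (0::real)" using d by simp
    fix l assume a: "is_oline l \<and> dist (canon l) (canon ell0) < min d (1/2)"
    then have dl: "dist (canon l) (0, vector [0,0,1]) < min d (1/2)" by (simp add: canon_ell0)
    have "\<bar>(snd (canon l) - vector [0,0,1]) $ 3\<bar> \<le> norm (snd (canon l) - vector [0,0,1])"
      by (rule component_le_norm_cart)
    also have "\<dots> = dist (snd (canon l)) (snd (0::real^3, vector [0,0,1::real] :: real^3))"
      by (simp add: dist_norm)
    also have "\<dots> \<le> dist (canon l) (0, vector [0,0,1])" by (rule dist_snd_le)
    finally have h: "\<bar>(snd (canon l) - vector [0,0,1]) $ 3\<bar> \<le> dist (canon l) (0, vector [0,0,1])" .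
    have "dist (canon l) (0, vector [0,0,1]) < 1/2" using dl by simp
    then have "snd (canon l) $ 3 > 0" using h by simp
    then have "same_oline (canon l) (lineY (Yf (canon l)))" by (rule Yf_same)
    then show "same_oline l (lineY (Yf (canon l)))"
      using same_oline_trans same_oline_canon a by blast
    have "dist (canon l) (0, vector [0,0,1]) < d" using dl by simp
    then have "dist (Yf (canon l)) (Yf (0, vector [0,0,1])) < \<eta>" using d(2) by blast
    then show "norm (Yf (canon l)) < \<eta>" by (simp add: Yf_e3)
  qed
qed


definition pinsY :: "(real \<times> real \<times> real) set \<Rightarrow> bool" where
  "pinsY G \<longleftrightarrow> (\<exists>\<eta>>0. \<forall>y. norm y < \<eta> \<and> (\<forall>g\<in>G. Phi g y \<ge> 0) \<longrightarrow> y = 0)"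

lemma np_bound:
  fixes y :: "real^4"
  assumes "\<bar>de\<bar> \<le> M" "M > 0" "norm y < 1/(3*M)"
  shows "de^2 * ((y$3-y$1)^2+(y$4-y$2)^2) < 1"
proof -
  define n where "n = norm y"
  have c: "\<bar>y$i\<bar> \<le> n" for i using component_le_norm_cart n_def by blast
  have a1: "\<bar>y$3-y$1\<bar> \<le> 2*n" using c[of 3] c[of 1] by linarith
  have a2: "\<bar>y$4-y$2\<bar> \<le> 2*n" using c[of 4] c[of 2] by linarith
  have s1: "(y$3-y$1)^2 \<le> (2*n)^2" using power_mono[OF a1, of 2] by simp
  have s2: "(y$4-y$2)^2 \<le> (2*n)^2" using power_mono[OF a2, of 2] by simp
  have d: "de^2 \<le> M^2" using power_mono[OF assms(1), of 2] by simp
  have "de^2 * ((y$3-y$1)^2+(y$4-y$2)^2) \<le> M^2 * (8 * n^2)"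
    using s1 s2 d by (intro mult_mono) (auto simp: power2_eq_square)
  also have "\<dots> = 8 * (M*n)^2" by (simp add: power_mult_distrib)
  also have "\<dots> < 1"
  proof -
    have "M * n < 1/3" using assms(2,3) n_def by (simp add: field_simps)
    moreover have "M * n \<ge> 0" using assms(2) n_def by simp
    ultimately have "(M*n)^2 < (1/3)^2" by (intro power_strict_mono) auto
    then show ?thesis by (simp add: power_divide)
  qed
  finally show ?thesis .
qed

lemma is_oline_lineY: "is_oline (lineY y)"
  by (simp add: is_oline_def lineY_def vec_eq_iff forall_3)

lemma pins_iff:
  assumes "finite G"
  shows "pins (gcon ` G) \<longleftrightarrow> pinsY G"
proof -
  define M where "M = (\<Sum>g\<in>G. \<bar>snd (snd g)\<bar>) + 1"
  have M0: "M > 0" unfolding M_def by (simp add: sum_nonneg add_nonneg_pos)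
  have Mg: "\<bar>snd (snd g)\<bar> \<le> M" if "g \<in> G" for g
  proof -
    have "\<bar>snd (snd g)\<bar> \<le> (\<Sum>g\<in>G. \<bar>snd (snd g)\<bar>)"
      using assms that by (intro member_le_sum) auto
    then show ?thesis unfolding M_def by simp
  qed
  have sat: "satisfies (lineY y) (gcon g) \<longleftrightarrow> Phi g y \<ge> 0" if "g \<in> G" "norm y < 1/(3*M)" for g y
    using sat_lineY np_bound[OF Mg[OF that(1)] M0 that(2)] by blast
  show ?thesis
  proof
    assume "pins (gcon ` G)"
    then obtain \<epsilon> where e: "\<epsilon> > 0" and P: "\<forall>l. is_oline l \<and> dist (canon l) (canon ell0) < \<epsilon> \<and> (\<forall>g\<in>gcon ` G. satisfies l g) \<longrightarrow> same_oline l ell0"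
      unfolding pins_def by blast
    obtain \<eta> where h: "\<eta> > 0" "\<forall>y. norm y < \<eta> \<longrightarrow> dist (canon (lineY y)) (canon ell0) < \<epsilon>"
      using N1[OF e] by blast
    show "pinsY G" unfolding pinsY_def
    proof (intro exI[of _ "min \<eta> (1/(3*M))"] conjI allI impI)
      show "min \<eta> (1/(3*M)) > 0" using h M0 by simp
      fix y assume a: "norm y < min \<eta> (1/(3*M)) \<and> (\<forall>g\<in>G. Phi g y \<ge> 0)"
      then have "\<forall>g\<in>gcon ` G. satisfies (lineY y) g" using sat by auto
      moreover have "dist (canon (lineY y)) (canon ell0) < \<epsilon>" using h a by simp
      ultimately have "same_oline (lineY y) ell0" using P is_oline_lineY by blast
      then show "y = 0" using lineY_ell0 by blast
    qed
  next
    assume "pinsY G"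
    then obtain \<eta> where h: "\<eta> > 0" "\<forall>y. norm y < \<eta> \<and> (\<forall>g\<in>G. Phi g y \<ge> 0) \<longrightarrow> y = 0"
      unfolding pinsY_def by blast
    obtain \<epsilon> where e: "\<epsilon> > 0" "\<forall>l. is_oline l \<and> dist (canon l) (canon ell0) < \<epsilon> \<longrightarrow>
       same_oline l (lineY (Yf (canon l))) \<and> norm (Yf (canon l)) < min \<eta> (1/(3*M))"
      using N2[of "min \<eta> (1/(3*M))"] h M0 by auto
    show "pins (gcon ` G)" unfolding pins_def
    proof (intro conjI ballI exI[of _ \<epsilon>] allI impI)
      show "\<And>g. g \<in> gcon ` G \<Longrightarrow> satisfies ell0 g" using ell0_sat by auto
      show "\<epsilon> > 0" by (rule e)
      fix l assume a: "is_oline l \<and> dist (canon l) (canon ell0) < \<epsilon> \<and> (\<forall>g\<in>gcon ` G. satisfies l g)"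
      define y where "y = Yf (canon l)"
      have s: "same_oline l (lineY y)" and ny: "norm y < min \<eta> (1/(3*M))" using e(2) a unfolding y_def by blast+
      have "\<forall>g\<in>G. Phi g y \<ge> 0"
      proof
        fix g assume "g \<in> G"
        then have "satisfies l (gcon g)" using a by auto
        then have "satisfies (lineY y) (gcon g)" using same_oline_sat[OF s] by simp
        then show "Phi g y \<ge> 0" using sat \<open>g \<in> G\<close> ny by auto
      qed
      then have "y = 0" using h ny by auto
      then have "same_oline (lineY y) ell0" using lineY_ell0 by simp
      then show "same_oline l ell0" using s same_oline_trans by blast
    qed
  qed
qed


lemma normal_orth[simp]: "normal (orth g) = normal g"
  by (cases g) (simp add: orth_def normal_def)

lemma Phi_orth: "Phi (orth g) y = - (normal g \<bullet> y)"
  by (cases g) (simp add: Phi_def orth_def normal_def)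

lemma Q_bound:
  fixes y :: "real^4"
  shows "\<bar>y$1 * y$4 - y$2 * y$3\<bar> \<le> 2 * (norm y)^2"
proof -
  have c: "\<bar>y$i\<bar> \<le> norm y" for i using component_le_norm_cart by blast
  have "\<bar>y$1 * y$4\<bar> \<le> norm y * norm y" unfolding abs_mult by (intro mult_mono c) auto
  moreover have "\<bar>y$2 * y$3\<bar> \<le> norm y * norm y" unfolding abs_mult by (intro mult_mono c) auto
  ultimately show ?thesis by (simp add: power2_eq_square)
qed

lemma P1:
  assumes fin: "finite F" and p: "pinsY (orth ` F)"
  shows "pinsY F"
proof -
  obtain \<eta> where e: "\<eta> > 0" "\<forall>y. norm y < \<eta> \<and> (\<forall>g\<in>orth ` F. Phi g y \<ge> 0) \<longrightarrow> y = 0"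
    using p unfolding pinsY_def by blast
  have cone: "y = 0" if "\<forall>g\<in>F. normal g \<bullet> y \<le> 0" for y
  proof (rule ccontr)
    assume y0: "y \<noteq> 0"
    define t where "t = \<eta> / (2 * norm y)"
    have t0: "t > 0" using e y0 t_def by simp
    have "norm (t *\<^sub>R y) < \<eta>" using y0 e t_def by simp
    moreover have "\<forall>g\<in>orth ` F. Phi g (t *\<^sub>R y) \<ge> 0"
      using that t0 by (auto simp: Phi_orth mult_nonneg_nonpos)
    ultimately have "t *\<^sub>R y = 0" using e by blast
    then show False using t0 y0 by simp
  qed
  have Fne: "F \<noteq> {}"
  proof
    assume "F = {}"
    then have "(axis 1 1 :: real^4) = 0" using cone by blast
    then show False by (simp add: axis_eq_0_iff)
  qed
  define h where "h y = (\<Sum>g\<in>F. max 0 (normal g \<bullet> y))" for y :: "real^4"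
  have hc: "continuous_on (sphere 0 1) h" unfolding h_def by (intro continuous_intros)
  have sne: "sphere (0::real^4) 1 \<noteq> {}" by (simp add: sphere_eq_empty)
  obtain y0 where y0: "y0 \<in> sphere 0 1" "\<forall>y\<in>sphere 0 1. h y0 \<le> h y"
    using continuous_attains_inf[OF compact_sphere sne hc] by blast
  define m where "m = h y0"
  have m0: "m > 0"
  proof -
    have "y0 \<noteq> 0" using y0 by auto
    then have "\<not> (\<forall>g\<in>F. normal g \<bullet> y0 \<le> 0)" using cone by blast
    then obtain g where g: "g \<in> F" "normal g \<bullet> y0 > 0" by (auto simp: not_le)
    show ?thesis unfolding m_def h_def
      by (rule sum_pos2[OF fin g(1)]) (use g in auto)
  qed
  define N where "N = real (card F)"
  have N0: "N > 0" using Fne fin N_def by (simp add: card_gt_0_iff)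
  define M where "M = (\<Sum>g\<in>F. \<bar>snd (snd g)\<bar>)"
  have Mg: "\<bar>snd (snd g)\<bar> \<le> M" if "g \<in> F" for g
    unfolding M_def using fin that by (intro member_le_sum) auto
  have M0: "M \<ge> 0" unfolding M_def by (simp add: sum_nonneg)
  have key: "\<exists>g\<in>F. Phi g y < 0" if yne: "y \<noteq> 0" and ny: "norm y < m / (N * (2*M+1))" for y
  proof -
    define z where "z = (1 / norm y) *\<^sub>R y"
    have zs: "z \<in> sphere 0 1" using yne z_def by simp
    have hz: "h z \<ge> m" using y0(2) zs m_def by auto
    obtain g where g: "g \<in> F" "max 0 (normal g \<bullet> z) \<ge> m / N"
    proof (rule ccontr)
      assume "\<not> thesis"
      then have "\<forall>g\<in>F. max 0 (normal g \<bullet> z) < m / N" by (meson not_le that)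
      then have "h z < (\<Sum>g\<in>F. m / N)" unfolding h_def using fin Fne by (intro sum_strict_mono) auto
      also have "\<dots> = m" using N0 N_def by simp
      finally show False using hz by simp
    qed
    have mN: "m / N > 0" using m0 N0 by simp
    have nz: "normal g \<bullet> z \<ge> m / N" using g mN by (auto simp: max_def split: if_splits)
    have "normal g \<bullet> y = norm y * (normal g \<bullet> z)" using yne z_def by simp
    then have ly: "normal g \<bullet> y \<ge> norm y * (m / N)" using mult_left_mono[OF nz norm_ge_zero[of y]] by simp
    have "snd (snd g) * (y$1 * y$4 - y$2 * y$3) \<le> M * (2 * (norm y)^2)"
    proof -
      have "snd (snd g) * (y$1 * y$4 - y$2 * y$3) \<le> \<bar>snd (snd g)\<bar> * \<bar>y$1 * y$4 - y$2 * y$3\<bar>"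
        by (metis abs_ge_self abs_mult)
      also have "\<dots> \<le> M * (2 * (norm y)^2)" using Mg[OF g(1)] Q_bound[of y] by (intro mult_mono) auto
      finally show ?thesis .
    qed
    moreover have "M * (2 * (norm y)^2) < norm y * (m / N)"
    proof -
      have NM: "N * (2*M+1) > 0" using N0 M0 by simp
      have "norm y * (N * (2*M+1)) < m" using ny NM by (simp add: pos_less_divide_eq)
      moreover have "norm y * (2*M) * N \<le> norm y * (N * (2*M+1))"
      proof -
        have a: "N * (2*M) \<le> N * (2*M+1)" using N0 by simp
        have "norm y * (N*(2*M)) \<le> norm y * (N * (2*M+1))" by (rule mult_left_mono[OF a norm_ge_zero])
        then show ?thesis by (simp add: ac_simps)
      qed
      ultimately have "norm y * (2*M) * N < m" by linarith
      then have "norm y * (2*M) < m / N" using N0 by (simp add: pos_less_divide_eq)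
      then have "norm y * (norm y * (2*M)) < norm y * (m / N)" by (rule mult_strict_left_mono) (use yne in simp)
      then show ?thesis by (simp add: power2_eq_square algebra_simps)
    qed
    ultimately have "Phi g y < 0" unfolding Phi_def using ly by linarith
    then show ?thesis using g by blast
  qed
  show ?thesis unfolding pinsY_def
  proof (intro exI[of _ "m / (N * (2*M+1))"] conjI allI impI)
    show "m / (N * (2*M+1)) > 0" using m0 N0 M0 by simp
    fix y assume "norm y < m / (N * (2*M+1)) \<and> (\<forall>g\<in>F. Phi g y \<ge> 0)"
    then show "y = 0" using key by (meson not_le)
  qed
qed


lemma Phi_scale: "Phi g (t *\<^sub>R z) = t * (- (normal g \<bullet> z) + t * (snd (snd g) * (z$1 * z$4 - z$2 * z$3)))"
  by (simp add: Phi_def algebra_simps)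

lemma strict_notpins:
  assumes fin: "finite G" and z: "\<forall>g\<in>G. normal g \<bullet> z < 0" and z0: "z \<noteq> 0"
  shows "\<not> pinsY G"
proof
  assume "pinsY G"
  then obtain \<eta> where e: "\<eta> > 0" "\<forall>y. norm y < \<eta> \<and> (\<forall>g\<in>G. Phi g y \<ge> 0) \<longrightarrow> y = 0"
    unfolding pinsY_def by blast
  have ev: "eventually (\<lambda>t. \<forall>g\<in>G. 0 < - (normal g \<bullet> z) + t * (snd (snd g) * (z$1 * z$4 - z$2 * z$3))) (at_right 0)"
  proof (rule eventually_ball_finite[OF fin], rule ballI)
    fix g assume g: "g \<in> G"
    define c where "c = snd (snd g) * (z$1 * z$4 - z$2 * z$3)"
    have "((\<lambda>t. - (normal g \<bullet> z) + t * c) \<longlongrightarrow> - (normal g \<bullet> z) + 0 * c) (at_right 0)"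
      by (intro tendsto_intros)
    then have "((\<lambda>t. - (normal g \<bullet> z) + t * c) \<longlongrightarrow> - (normal g \<bullet> z)) (at_right 0)" by simp
    moreover have "0 < - (normal g \<bullet> z)" using z g by auto
    ultimately show "eventually (\<lambda>t. 0 < - (normal g \<bullet> z) + t * (snd (snd g) * (z$1 * z$4 - z$2 * z$3))) (at_right 0)"
      unfolding c_def by (rule order_tendstoD(1))
  qed
  then obtain b where b: "b > 0" "\<forall>t>0. t < b \<longrightarrow> (\<forall>g\<in>G. 0 < - (normal g \<bullet> z) + t * (snd (snd g) * (z$1 * z$4 - z$2 * z$3)))"
    unfolding eventually_at_right_field by auto
  define t where "t = min (b/2) (\<eta> / (2 * norm z))"
  have t0: "t > 0" using b e z0 t_def by simp
  have tb: "t < b" using b t_def by simp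
  have "t * norm z \<le> (\<eta> / (2 * norm z)) * norm z" using z0 t_def by (intro mult_right_mono) auto
  also have "\<dots> = \<eta> / 2" using z0 by simp
  finally have nt: "norm (t *\<^sub>R z) < \<eta>" using t0 e by simp
  have "\<forall>g\<in>G. Phi g (t *\<^sub>R z) \<ge> 0"
  proof
    fix g assume "g \<in> G"
    then have "0 < - (normal g \<bullet> z) + t * (snd (snd g) * (z$1 * z$4 - z$2 * z$3))" using b(2) t0 tb by blast
    then have "0 < t * (- (normal g \<bullet> z) + t * (snd (snd g) * (z$1 * z$4 - z$2 * z$3)))" using t0 by simp
    then show "Phi g (t *\<^sub>R z) \<ge> 0" unfolding Phi_scale by linarith
  qed
  then have "t *\<^sub>R z = 0" using e nt by blast
  then show False using t0 z0 by simp
qed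

lemma notpins_rank1:
  assumes z: "\<forall>g\<in>G. normal g \<bullet> z \<le> 0" and z0: "z \<noteq> 0" and q: "z$1 * z$4 - z$2 * z$3 = 0"
  shows "\<not> pinsY G"
proof
  assume "pinsY G"
  then obtain \<eta> where e: "\<eta> > 0" "\<forall>y. norm y < \<eta> \<and> (\<forall>g\<in>G. Phi g y \<ge> 0) \<longrightarrow> y = 0"
    unfolding pinsY_def by blast
  define t where "t = \<eta> / (2 * norm z)"
  have t0: "t > 0" using e z0 t_def by simp
  have nt: "norm (t *\<^sub>R z) < \<eta>" using t0 e z0 t_def by simp
  have "\<forall>g\<in>G. Phi g (t *\<^sub>R z) \<ge> 0"
  proof
    fix g assume "g \<in> G"
    then have "normal g \<bullet> z \<le> 0" using z by blast
    then have "0 \<le> t * (- (normal g \<bullet> z))" using t0 by (intro mult_nonneg_nonneg) auto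
    then show "Phi g (t *\<^sub>R z) \<ge> 0" unfolding Phi_scale q by simp
  qed
  then have "t *\<^sub>R z = 0" using e nt by blast
  then show False using t0 z0 by simp
qed

lemma twoD:
  fixes a1 a2 b1 b2 :: real
  shows "\<exists>r1 r2. (r1 \<noteq> 0 \<or> r2 \<noteq> 0) \<and> a1*r1 + a2*r2 \<le> 0 \<and> b1*r1 + b2*r2 \<le> 0"
proof (cases "a1 \<noteq> 0 \<or> a2 \<noteq> 0")
  case True
  show ?thesis
  proof (cases "b1*(-a2) + b2*a1 \<le> 0")
    case True
    then show ?thesis using \<open>a1 \<noteq> 0 \<or> a2 \<noteq> 0\<close> by (intro exI[of _ "-a2"] exI[of _ a1]) (auto simp: algebra_simps)
  next
    case False
    then show ?thesis using \<open>a1 \<noteq> 0 \<or> a2 \<noteq> 0\<close> by (intro exI[of _ "a2"] exI[of _ "-a1"]) (auto simp: algebra_simps)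
  qed
next
  case False
  show ?thesis
  proof (cases "b1 \<noteq> 0 \<or> b2 \<noteq> 0")
    case True
    have "b1*(-b1) + b2*(-b2) \<le> 0" by (simp add: add_nonpos_nonpos)
    then show ?thesis using True False by (intro exI[of _ "-b1"] exI[of _ "-b2"]) auto
  next
    case False
    then show ?thesis using \<open>\<not> (a1 \<noteq> 0 \<or> a2 \<noteq> 0)\<close> by (intro exI[of _ 1] exI[of _ 0]) auto
  qed
qed

lemma normal_rank1:
  "normal g \<bullet> (vector [r1*p1, r1*p2, r2*p1, r2*p2] :: real^4) =
     (sin (fst (snd g)) * p1 - cos (fst (snd g)) * p2) * ((1 - fst g) * r1 + fst g * r2)"
  by (cases g) (simp add: normal_def inner_vec_def sum_4 algebra_simps)

lemma small_notpins:
  assumes fin: "finite G" and c: "card G \<le> 3"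
  shows "\<not> pinsY G"
proof -
  obtain xs where xs: "set xs = G" "distinct xs" using finite_distinct_list[OF fin] by blast
  have lx: "length xs \<le> 3" using distinct_card[OF xs(2)] xs(1) c by simp
  define g1 where "g1 = xs ! 0"
  define g2 where "g2 = xs ! 1"
  define g3 where "g3 = xs ! 2"
  have sub: "G \<subseteq> {g1, g2, g3}"
  proof
    fix g assume "g \<in> G"
    then obtain i where i: "i < length xs" "g = xs ! i" using xs(1) by (auto simp: in_set_conv_nth)
    then have "i = 0 \<or> i = 1 \<or> i = 2" using lx by auto
    then show "g \<in> {g1, g2, g3}" using i g1_def g2_def g3_def by auto
  qed
  define p1 where "p1 = cos (fst (snd g1))"
  define p2 where "p2 = sin (fst (snd g1))"
  define k where "k (g::real\<times>real\<times>real) = sin (fst (snd g)) * p1 - cos (fst (snd g)) * p2" for g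
  have k1: "k g1 = 0" unfolding k_def p1_def p2_def by (simp add: mult.commute)
  obtain r1 r2 where r: "r1 \<noteq> 0 \<or> r2 \<noteq> 0"
    "(k g2 * (1 - fst g2))*r1 + (k g2 * fst g2)*r2 \<le> 0"
    "(k g3 * (1 - fst g3))*r1 + (k g3 * fst g3)*r2 \<le> 0"
    using twoD by blast
  define z where "z = (vector [r1*p1, r1*p2, r2*p1, r2*p2] :: real^4)"
  have nz: "normal g \<bullet> z = k g * ((1 - fst g) * r1 + fst g * r2)" for g
    unfolding z_def k_def by (rule normal_rank1)
  have "\<forall>g\<in>G. normal g \<bullet> z \<le> 0"
  proof
    fix g assume "g \<in> G"
    then have "g = g1 \<or> g = g2 \<or> g = g3" using sub by auto
    then show "normal g \<bullet> z \<le> 0"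
    proof (elim disjE)
      assume "g = g1" then show ?thesis using nz k1 by simp
    next
      assume "g = g2"
      moreover have "normal g2 \<bullet> z = (k g2 * (1 - fst g2))*r1 + (k g2 * fst g2)*r2"
        unfolding nz by (simp add: algebra_simps)
      ultimately show ?thesis using r(2) by simp
    next
      assume "g = g3"
      moreover have "normal g3 \<bullet> z = (k g3 * (1 - fst g3))*r1 + (k g3 * fst g3)*r2"
        unfolding nz by (simp add: algebra_simps)
      ultimately show ?thesis using r(3) by simp
    qed
  qed
  moreover have "z \<noteq> 0"
  proof
    assume "z = 0"
    then have e: "r1*p1 = 0" "r1*p2 = 0" "r2*p1 = 0" "r2*p2 = 0"
      unfolding z_def vec_eq_iff forall_4 by auto
    have "p1^2 + p2^2 = 1" unfolding p1_def p2_def by simp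
    then have "p1 \<noteq> 0 \<or> p2 \<noteq> 0" by auto
    then show False using e r(1) by auto
  qed
  moreover have "z$1 * z$4 - z$2 * z$3 = 0" unfolding z_def by simp
  ultimately show ?thesis by (rule notpins_rank1)
qed


lemma dual:
  fixes N :: "(real^4) set"
  assumes fin: "finite N" and ind: "independent N"
  shows "\<exists>w. \<forall>v\<in>N. v \<bullet> w < 0"
proof -
  have "\<forall>v\<in>N. \<exists>p. (\<forall>u\<in>N - {v}. u \<bullet> p = 0) \<and> v \<bullet> p > 0"
  proof
    fix v assume v: "v \<in> N"
    obtain a p where a: "a \<in> span (N - {v})" and o: "\<And>w. w \<in> span (N - {v}) \<Longrightarrow> orthogonal p w"
      and vap: "v = a + p"
      using orthogonal_subspace_decomp_exists[of "N - {v}" v] by blast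
    have nv: "v \<notin> span (N - {v})" using ind v unfolding dependent_def by blast
    have p0: "p \<noteq> 0" using nv a vap by auto
    have "p \<bullet> a = 0" using o[OF a] unfolding orthogonal_def .
    then have "v \<bullet> p = p \<bullet> p" using vap by (simp add: inner_add_left inner_commute[of a p])
    then have "v \<bullet> p > 0" using p0 by simp
    moreover have "\<forall>u\<in>N - {v}. u \<bullet> p = 0"
      using o span_base unfolding orthogonal_def by (metis inner_commute)
    ultimately show "\<exists>p. (\<forall>u\<in>N - {v}. u \<bullet> p = 0) \<and> v \<bullet> p > 0" by blast
  qed
  then obtain P where P: "\<forall>v\<in>N. (\<forall>u\<in>N - {v}. u \<bullet> P v = 0) \<and> v \<bullet> P v > 0"
    by metis
  define w where "w = - (\<Sum>v\<in>N. P v)"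
  have "u \<bullet> w < 0" if u: "u \<in> N" for u
  proof -
    have "u \<bullet> w = - (\<Sum>v\<in>N. u \<bullet> P v)" unfolding w_def by (simp add: inner_sum_right)
    also have "(\<Sum>v\<in>N. u \<bullet> P v) = u \<bullet> P u + (\<Sum>v\<in>N - {u}. u \<bullet> P v)"
      using fin u by (simp add: sum.remove)
    also have "(\<Sum>v\<in>N - {u}. u \<bullet> P v) = 0"
      using P u by (intro sum.neutral) auto
    finally show ?thesis using P u by simp
  qed
  then show ?thesis by blast
qed

lemma P2main:
  assumes fin: "finite F" and c4: "card F \<ge> 4"
    and nd: "\<forall>S\<subseteq>F. card S = 4 \<longrightarrow> \<not> dependent_family S"
    and np: "\<not> pinsY (orth ` F)"
  shows "\<not> pinsY F"
proof -
  have "\<not> (\<forall>y. norm y < 1 \<and> (\<forall>g\<in>orth ` F. Phi g y \<ge> 0) \<longrightarrow> y = 0)"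
    using np unfolding pinsY_def using zero_less_one by blast
  then obtain y where y: "norm y < 1" "\<forall>g\<in>orth ` F. Phi g y \<ge> 0" "y \<noteq> 0" by blast
  have yF: "\<forall>g\<in>F. normal g \<bullet> y \<le> 0" using y(2) by (auto simp: Phi_orth)
  define A where "A = {g\<in>F. normal g \<bullet> y = 0}"
  have AF: "A \<subseteq> F" unfolding A_def by auto
  have finA: "finite A" using fin AF finite_subset by blast
  have indA: "inj_on normal A \<and> independent (normal ` A)"
  proof (cases "card A \<ge> 4")
    case True
    then obtain S where S: "S \<subseteq> A" "card S = 4" "finite S" by (meson obtain_subset_with_card_n)
    have "\<not> dependent_family S" using nd S AF by blast
    then have iS: "inj_on normal S" "independent (normal ` S)" unfolding dependent_family_def by auto
    have cS: "card (normal ` S) = 4" using card_image[OF iS(1)] S by simp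
    have "(UNIV :: (real^4) set) \<subseteq> span (normal ` S)"
      by (rule card_ge_dim_independent) (use iS(2) cS in auto)
    then have ys: "y \<in> span (normal ` S)" by blast
    have "orthogonal y v" if "v \<in> normal ` S" for v
      using that S(1) unfolding A_def orthogonal_def by (auto simp: inner_commute)
    then have "orthogonal y y" using orthogonal_to_span[OF ys] by blast
    then show ?thesis using y(3) by (simp add: orthogonal_def)
  next
    case False
    have "card (F - A) = card F - card A" using card_Diff_subset[OF finA AF] .
    then have "4 - card A \<le> card (F - A)" using c4 by simp
    then obtain B where B: "B \<subseteq> F - A" "card B = 4 - card A" "finite B" by (meson obtain_subset_with_card_n)
    have "card (A \<union> B) = card A + card B" using B finA by (intro card_Un_disjoint) auto
    then have c: "card (A \<union> B) = 4" using B False by simp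
    have "A \<union> B \<subseteq> F" using AF B by auto
    then have "\<not> dependent_family (A \<union> B)" using nd c by blast
    then have "inj_on normal (A \<union> B)" "independent (normal ` (A \<union> B))" unfolding dependent_family_def by auto
    then show ?thesis using inj_on_subset independent_mono by (metis Un_upper1 image_mono)
  qed
  obtain w where w: "\<forall>v\<in>normal ` A. v \<bullet> w < 0" using dual[of "normal ` A"] indA finA by blast
  have ev: "eventually (\<lambda>s. \<forall>g\<in>F. normal g \<bullet> (y + s *\<^sub>R w) < 0) (at_right 0)"
  proof (rule eventually_ball_finite[OF fin], rule ballI)
    fix g assume g: "g \<in> F"
    show "eventually (\<lambda>s. normal g \<bullet> (y + s *\<^sub>R w) < 0) (at_right 0)"
    proof (cases "g \<in> A")
      case True
      then have "normal g \<bullet> y = 0" "normal g \<bullet> w < 0" using w A_def by blast+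
      then have "normal g \<bullet> (y + s *\<^sub>R w) < 0" if "s > 0" for s
        using that by (simp add: inner_add_right mult_pos_neg)
      then show ?thesis unfolding eventually_at_right_field by (intro exI[of _ 1]) auto
    next
      case False
      then have ng: "normal g \<bullet> y < 0" using yF g A_def by force
      have "((\<lambda>s. normal g \<bullet> y + s * (normal g \<bullet> w)) \<longlongrightarrow> normal g \<bullet> y + 0 * (normal g \<bullet> w)) (at_right 0)"
        by (intro tendsto_intros)
      then have "((\<lambda>s. normal g \<bullet> y + s * (normal g \<bullet> w)) \<longlongrightarrow> normal g \<bullet> y) (at_right 0)" by simp
      from order_tendstoD(2)[OF this ng]
      show ?thesis by (simp add: inner_add_right)
    qed
  qed
  then obtain b where b: "b > 0" "\<forall>s>0. s < b \<longrightarrow> (\<forall>g\<in>F. normal g \<bullet> (y + s *\<^sub>R w) < 0)"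
    unfolding eventually_at_right_field by auto
  define z where "z = y + (b/2) *\<^sub>R w"
  have zF: "\<forall>g\<in>F. normal g \<bullet> z < 0" using b unfolding z_def by simp
  have "F \<noteq> {}" using c4 by auto
  then have "z \<noteq> 0" using zF by auto
  then show ?thesis using strict_notpins[OF fin zF] by blast
qed

theorem lemma25:
  fixes F :: "(real \<times> real \<times> real) set"
  assumes "finite F"
    and "\<forall>(lam, \<alpha>, \<delta>)\<in>F. 0 \<le> \<alpha> \<and> \<alpha> < 2 * pi"
  shows "(pins (gcon ` orth ` F) \<longrightarrow> pins (gcon ` F))
     \<and> (pins (gcon ` F) \<and> (\<forall>S\<subseteq>F. card S = 4 \<longrightarrow> \<not> dependent_family S)
          \<longrightarrow> pins (gcon ` orth ` F))"
proof -
  have fo: "finite (orth ` F)" using assms(1) by simp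
  have "pins (gcon ` orth ` F) \<longrightarrow> pins (gcon ` F)"
    using pins_iff[OF fo] pins_iff[OF assms(1)] P1[OF assms(1)] by blast
  moreover have "pins (gcon ` F) \<and> (\<forall>S\<subseteq>F. card S = 4 \<longrightarrow> \<not> dependent_family S)
          \<longrightarrow> pins (gcon ` orth ` F)"
  proof (intro impI, elim conjE)
    assume p: "pins (gcon ` F)" and nd: "\<forall>S\<subseteq>F. card S = 4 \<longrightarrow> \<not> dependent_family S"
    have pF: "pinsY F" using p pins_iff[OF assms(1)] by blast
    have "pinsY (orth ` F)"
    proof (rule ccontr)
      assume np: "\<not> pinsY (orth ` F)"
      show False
      proof (cases "card F \<ge> 4")
        case True
        then show False using P2main[OF assms(1) True nd np] pF by blast
      next
        case False
        then show False using small_notpins[OF assms(1)] pF by simp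
      qed
    qed
    then show "pins (gcon ` orth ` F)" using pins_iff[OF fo] by blast
  qed
  ultimately show ?thesis by blast
qed

end
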